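(* Let $\mathcal{X}$ and $\mathcal{Y}$ be finite sets with $2 \le |\mathcal{X}|,|\mathcal{Y}| < \infty$, and let $X,Y$ have joint pmf $P_{X,Y}$ with $P_X(x)>0$ for all $x\in\mathcal{X}$ and $P_Y(y)>0$ for all $y\in\mathcal{Y}$. Then $$\eta_{\chi^2}(P_X,P_{Y|X}) \le \eta_{\mathrm{KL}}(P_X,P_{Y|X}) \le \frac{\eta_{\chi^2}(P_X,P_{Y|X})}{\min_{x\in\mathcal{X}}P_X(x)}.$$
   Context: Let $W$ be the column stochastic matrix of the channel $P_{Y|X}$ (its $x$th column is $P_{Y|X=x}$), mapping a pmf $R_X$ on $\mathcal{X}$ to $WR_X$ on $\mathcal{Y}$. The KL divergence is $D(R_X\|P_X)=\sum_x R_X(x)\log(R_X(x)/P_X(x))$ (natural log), and the $\chi^2$-divergence is $\chi^2(R_X\|P_X)=\sum_x (R_X(x)-P_X(x))^2/P_X(x)$. For a divergence $D_\bullet$ in $\{D,\chi^2\}$, the contraction coefficient is $\eta_\bullet(P_X,P_{Y|X})=\sup\{D_\bullet(WR_X\|WP_X)/D_\bullet(R_X\|P_X): R_X \text{ a pmf on } \mathcal{X},\ 0<D_\bullet(R_X\|P_X)<\infty\}$; $\eta_{\mathrm{KL}}$ is the one for KL divergence and $\eta_{\chi^2}$ the one for $\chi^2$-divergence. *)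

theory Defs
  imports Complex_Main "HOL-Library.Cardinality"
begin

definition is_pmf :: "('a::finite \<Rightarrow> real) \<Rightarrow> bool" where
  "is_pmf R \<longleftrightarrow> (\<forall>x. 0 \<le> R x) \<and> (\<Sum>x\<in>UNIV. R x) = 1"

definition kl_div :: "('a::finite \<Rightarrow> real) \<Rightarrow> ('a \<Rightarrow> real) \<Rightarrow> real" where
  "kl_div R P = (\<Sum>x\<in>UNIV. if R x = 0 then 0 else R x * ln (R x / P x))"

definition chi2_div :: "('a::finite \<Rightarrow> real) \<Rightarrow> ('a \<Rightarrow> real) \<Rightarrow> real" where
  "chi2_div R P = (\<Sum>x\<in>UNIV. (R x - P x)^2 / P x)"

definition marg_X :: "('x::finite \<Rightarrow> 'y::finite \<Rightarrow> real) \<Rightarrow> 'x \<Rightarrow> real" where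
  "marg_X P x = (\<Sum>y\<in>UNIV. P x y)"

definition marg_Y :: "('x::finite \<Rightarrow> 'y::finite \<Rightarrow> real) \<Rightarrow> 'y \<Rightarrow> real" where
  "marg_Y P y = (\<Sum>x\<in>UNIV. P x y)"

definition channel :: "('x::finite \<Rightarrow> 'y::finite \<Rightarrow> real) \<Rightarrow> 'y \<Rightarrow> 'x \<Rightarrow> real" where
  "channel P y x = P x y / marg_X P x"

definition channel_apply :: "('x::finite \<Rightarrow> 'y::finite \<Rightarrow> real) \<Rightarrow> ('x \<Rightarrow> real) \<Rightarrow> 'y \<Rightarrow> real" where
  "channel_apply P R y = (\<Sum>x\<in>UNIV. channel P y x * R x)"

text \<open>Since P_X > 0 and P_Y > 0 are assumed,
  both divergences are always finite, so the condition D < infinity is automatic.\<close>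
definition contraction_coeff ::
  "(('x::finite \<Rightarrow> real) \<Rightarrow> ('x \<Rightarrow> real) \<Rightarrow> real) \<Rightarrow>
   (('y::finite \<Rightarrow> real) \<Rightarrow> ('y \<Rightarrow> real) \<Rightarrow> real) \<Rightarrow>
   ('x \<Rightarrow> 'y \<Rightarrow> real) \<Rightarrow> real" where
  "contraction_coeff DivX DivY P =
     Sup {DivY (channel_apply P R) (channel_apply P (marg_X P)) / DivX R (marg_X P) | R.
           is_pmf R \<and> 0 < DivX R (marg_X P)}"

definition eta_KL :: "('x::finite \<Rightarrow> 'y::finite \<Rightarrow> real) \<Rightarrow> real" where
  "eta_KL P = contraction_coeff kl_div kl_div P"

definition eta_chi2 :: "('x::finite \<Rightarrow> 'y::finite \<Rightarrow> real) \<Rightarrow> real" where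
  "eta_chi2 P = contraction_coeff chi2_div chi2_div P"

end

theory Submission
  imports Defs "HOL-Analysis.Convex" "HOL-Real_Asymp.Real_Asymp"
begin

lemma ln_aux:
  fixes t :: real assumes "t > 0"
  shows "(5*t^2-4*t-1)/(2*t^2+4*t) \<le> ln t"
proof -
  define g where "g = (\<lambda>x::real. ln x - (5*x^2-4*x-1)/(2*x^2+4*x))"
  have D: "DERIV g x :> 4*(x-1)^3/(2*x^2+4*x)^2" if "x > 0" for x
  proof -
    have nz: "2*x^2+4*x \<noteq> 0" using that by (intro order.strict_implies_not_eq[symmetric] add_pos_pos) auto
    have "DERIV g x :> 1/x - ((10*x-4)*(2*x^2+4*x) - (5*x^2-4*x-1)*(4*x+4))/(2*x^2+4*x)^2"
      unfolding g_def using that nz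
      by (auto intro!: derivative_eq_intros simp: field_simps power2_eq_square)
    moreover have "1/x - ((10*x-4)*(2*x^2+4*x) - (5*x^2-4*x-1)*(4*x+4))/(2*x^2+4*x)^2
        = 4*(x-1)^3/(2*x^2+4*x)^2"
    proof -
      have e1: "1/x = (x*(2*x+4)^2)/(2*x^2+4*x)^2" using that nz by (simp add: field_simps) (simp add: power2_eq_square algebra_simps)
      have "1/x - ((10*x-4)*(2*x^2+4*x) - (5*x^2-4*x-1)*(4*x+4))/(2*x^2+4*x)^2
         = (x*(2*x+4)^2 - ((10*x-4)*(2*x^2+4*x) - (5*x^2-4*x-1)*(4*x+4)))/(2*x^2+4*x)^2"
        by (simp add: e1 diff_divide_distrib)
      also have "x*(2*x+4)^2 - ((10*x-4)*(2*x^2+4*x) - (5*x^2-4*x-1)*(4*x+4)) = 4*(x-1)^3"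
        by (simp add: algebra_simps power2_eq_square power3_eq_cube)
      finally show ?thesis .
    qed
    ultimately show ?thesis by simp
  qed
  have C: "continuous_on {a..b} g" if "a > 0" for a b
  proof (rule continuous_at_imp_continuous_on, intro ballI)
    fix x assume "x \<in> {a..b}"
    then have "x > 0" using that by auto
    from DERIV_isCont[OF D[OF this]] show "isCont g x" .
  qed
  have g1: "g 1 = 0" by (simp add: g_def)
  have "0 \<le> g t"
  proof (cases "t \<ge> 1")
    case True
    have "g 1 \<le> g t"
    proof (rule DERIV_nonneg_imp_increasing_open[of 1 t g, OF True])
      fix x assume "1 < x" "x < t"
      then show "\<exists>y. DERIV g x :> y \<and> y \<ge> 0" using D[of x] by (intro exI[of _ "4*(x-1)^3/(2*x^2+4*x)^2"]) auto
    qed (rule C, simp)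
    then show ?thesis using g1 by simp
  next
    case False
    have "g t \<ge> g 1"
    proof (rule DERIV_nonpos_imp_decreasing_open[of t 1 g])
      show "t \<le> 1" using False by simp
      fix x assume "t < x" "x < 1"
      have h: "(x-1)^3 \<le> 0" using \<open>x < 1\<close> by (simp add: power_le_zero_eq)
      have "4*(x-1)^3/(2*x^2+4*x)^2 \<le> 0" by (rule divide_nonpos_nonneg) (use h in auto)
      moreover have "DERIV g x :> 4*(x-1)^3/(2*x^2+4*x)^2" using D[of x] \<open>t < x\<close> assms by simp
      ultimately show "\<exists>y. DERIV g x :> y \<and> y \<le> 0" by blast
    qed (rule C, fact)
    then show ?thesis using g1 by simp
  qed
  then show ?thesis by (simp add: g_def)
qed

lemma kl_term_bound:
  fixes r p :: real assumes "r \<ge> 0" "p > 0"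
  shows "3*(r-p)^2/(2*(r+2*p)) \<le> (if r = 0 then 0 else r * ln (r/p)) - r + p"
proof (cases "r = 0")
  case True then show ?thesis using assms by (simp add: power2_eq_square)
next
  case False
  then have r: "r > 0" using assms by simp
  define t where "t = r/p"
  have t: "t > 0" using r assms by (simp add: t_def)
  have "r*((5*t^2-4*t-1)/(2*t^2+4*t)) \<le> r * ln t" by (intro mult_left_mono ln_aux t) (use r in auto)
  moreover have "r*((5*t^2-4*t-1)/(2*t^2+4*t)) = 3*(r-p)^2/(2*(r+2*p)) + r - p"
  proof -
    have rt: "r = t*p" using assms by (simp add: t_def)
    have t2: "t + 2 > 0" using t by simp
    have "r*((5*t^2-4*t-1)/(2*t^2+4*t)) = t*(p*(5*t^2-4*t-1))/(t*(2*t+4))"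
      unfolding rt by (simp add: power2_eq_square algebra_simps)
    also have "\<dots> = p*(5*t^2-4*t-1)/(2*t+4)" using t by simp
    also have "\<dots> = p*(3*(t-1)^2)/(2*t+4) + t*p - p"
    proof -
      have nz: "2*t+4 \<noteq> 0" using t by simp
      show ?thesis using nz by (simp add: field_simps power2_eq_square)
    qed
    also have "p*(3*(t-1)^2)/(2*t+4) = p*(p*(3*(t-1)^2))/(p*(2*t+4))" using assms by simp
    also have "p*(p*(3*(t-1)^2))/(p*(2*t+4)) = 3*(t*p-p)^2/(2*(t*p+2*p))"
      by (simp add: power2_eq_square algebra_simps)
    finally show ?thesis by (simp add: rt)
  qed
  ultimately show ?thesis using False by (simp add: t_def)
qed

lemma kl_le_chi_term:
  fixes r q :: real assumes "r \<ge> 0" "q > 0"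
  shows "(if r = 0 then 0 else r * ln (r/q)) \<le> (r-q)^2/q + (r - q)"
proof (cases "r = 0")
  case True then show ?thesis using assms by (simp add: power2_eq_square)
next
  case False
  then have r: "r > 0" using assms by simp
  have "r * ln (r/q) \<le> r * (r/q - 1)" using r assms by (intro mult_left_mono ln_le_minus_one) auto
  also have "r * (r/q - 1) = (r-q)^2/q + (r - q)" using assms by (simp add: field_simps power2_eq_square)
  finally show ?thesis using False by simp
qed

lemma kl_le_chi:
  fixes R Q :: "'a::finite \<Rightarrow> real"
  assumes "is_pmf R" "is_pmf Q" "\<And>x. Q x > 0"
  shows "kl_div R Q \<le> chi2_div R Q"
proof -
  have "kl_div R Q \<le> (\<Sum>x\<in>UNIV. (R x - Q x)^2/Q x + (R x - Q x))"
    unfolding kl_div_def using assms by (intro sum_mono kl_le_chi_term) (auto simp: is_pmf_def)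
  also have "\<dots> = chi2_div R Q"
    using assms by (simp add: chi2_div_def sum.distrib sum_subtractf is_pmf_def)
  finally show ?thesis .
qed

lemma abs_sum_bound:
  fixes d :: "'a::finite \<Rightarrow> real"
  assumes "sum d UNIV = 0"
  shows "(\<Sum>x\<in>UNIV. (d x)^2) \<le> (\<Sum>x\<in>UNIV. \<bar>d x\<bar>)^2 / 2"
proof -
  define S where "S = (\<Sum>x\<in>UNIV. \<bar>d x\<bar>)"
  have b: "2 * \<bar>d x\<bar> \<le> S" for x
  proof -
    have "d x + sum d (UNIV - {x}) = 0" using assms sum.remove[of UNIV x d] by simp
    then have "\<bar>d x\<bar> = \<bar>sum d (UNIV - {x})\<bar>" by simp
    also have "\<dots> \<le> sum (\<lambda>y. \<bar>d y\<bar>) (UNIV - {x})" by (rule sum_abs)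
    finally have "\<bar>d x\<bar> \<le> sum (\<lambda>y. \<bar>d y\<bar>) (UNIV - {x})" .
    moreover have "S = \<bar>d x\<bar> + sum (\<lambda>y. \<bar>d y\<bar>) (UNIV - {x})"
      unfolding S_def using sum.remove[of UNIV x "\<lambda>y. \<bar>d y\<bar>"] by simp
    ultimately show ?thesis by simp
  qed
  have "(\<Sum>x\<in>UNIV. (d x)^2) \<le> (\<Sum>x\<in>UNIV. \<bar>d x\<bar> * (S/2))"
  proof (rule sum_mono)
    fix x
    have "(d x)^2 = \<bar>d x\<bar> * \<bar>d x\<bar>" by (simp add: power2_eq_square abs_mult[symmetric])
    also have "\<dots> \<le> \<bar>d x\<bar> * (S/2)" using b[of x] by (intro mult_left_mono) auto
    finally show "(d x)^2 \<le> \<bar>d x\<bar> * (S/2)" .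
  qed
  also have "\<dots> = (\<Sum>x\<in>UNIV. \<bar>d x\<bar>) * (S/2)" by (rule sum_distrib_right[symmetric])
  also have "\<dots> = S * (S/2)" by (simp add: S_def)
  also have "\<dots> = S^2/2" by (simp add: power2_eq_square)
  finally show ?thesis by (simp add: S_def)
qed

lemma pinsker:
  fixes R Q :: "'a::finite \<Rightarrow> real"
  assumes R: "is_pmf R" and Q: "is_pmf Q" and Qp: "\<And>x. Q x > 0"
  shows "(\<Sum>x\<in>UNIV. \<bar>R x - Q x\<bar>)^2 \<le> 2 * kl_div R Q"
proof -
  define w where "w x = R x + 2 * Q x" for x
  have wp: "w x > 0" for x using R Qp[of x] by (simp add: w_def is_pmf_def add_nonneg_pos)
  have sw: "sum w UNIV = 3" using R Q by (simp add: w_def sum.distrib sum_distrib_left[symmetric] is_pmf_def)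
  have "(\<Sum>x\<in>UNIV. \<bar>R x - Q x\<bar>)^2 = (\<Sum>x\<in>UNIV. (\<bar>R x - Q x\<bar> / sqrt (w x)) * sqrt (w x))^2"
    using wp by (simp add: less_imp_neq[symmetric])
  also have "\<dots> \<le> (\<Sum>x\<in>UNIV. (\<bar>R x - Q x\<bar> / sqrt (w x))^2) * (\<Sum>x\<in>UNIV. (sqrt (w x))^2)"
    by (rule Cauchy_Schwarz_ineq_sum)
  also have "\<dots> = (\<Sum>x\<in>UNIV. (R x - Q x)^2 / w x) * 3"
    using wp sw by (simp add: power_divide less_imp_le)
  also have "(\<Sum>x\<in>UNIV. (R x - Q x)^2 / w x) \<le> (\<Sum>x\<in>UNIV. 2/3 * ((if R x = 0 then 0 else R x * ln (R x / Q x)) - R x + Q x))"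
  proof (rule sum_mono)
    fix x
    have kb: "3*(R x - Q x)^2/(2*(R x+2*Q x)) \<le> (if R x = 0 then 0 else R x * ln (R x / Q x)) - R x + Q x"
      using R Qp by (intro kl_term_bound) (auto simp: is_pmf_def)
    have eq: "(R x - Q x)^2 / w x = 2/3 * (3*(R x - Q x)^2/(2*(R x+2*Q x)))"
      using wp[of x] by (simp add: w_def field_simps)
    show "(R x - Q x)^2 / w x \<le> 2/3 * ((if R x = 0 then 0 else R x * ln (R x / Q x)) - R x + Q x)"
      unfolding eq by (rule mult_left_mono[OF kb]) simp
  qed
  also have "(\<Sum>x\<in>UNIV. 2/3 * ((if R x = 0 then 0 else R x * ln (R x / Q x)) - R x + Q x)) = 2/3 * (\<Sum>x\<in>UNIV. ((if R x = 0 then 0 else R x * ln (R x / Q x)) - R x + Q x))"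
    by (rule sum_distrib_left[symmetric])
  also have "(\<Sum>x\<in>UNIV. ((if R x = 0 then 0 else R x * ln (R x / Q x)) - R x + Q x)) = kl_div R Q"
    using R Q by (simp add: kl_div_def sum.distrib sum_subtractf is_pmf_def)
  finally show ?thesis by simp
qed

lemma kl_ge_chi:
  fixes R Q :: "'a::finite \<Rightarrow> real"
  assumes R: "is_pmf R" and Q: "is_pmf Q" and Qp: "\<And>x. Q x > 0" and c: "c > 0" "\<And>x. c \<le> Q x"
  shows "c * chi2_div R Q \<le> kl_div R Q"
proof -
  have "c * chi2_div R Q = (\<Sum>x\<in>UNIV. (c / Q x) * (R x - Q x)^2)"
    by (simp add: chi2_div_def sum_distrib_left)
  also have "\<dots> \<le> (\<Sum>x\<in>UNIV. (R x - Q x)^2)"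
  proof (rule sum_mono)
    fix x
    have "c / Q x \<le> 1" using c Qp[of x] by simp
    then show "(c / Q x) * (R x - Q x)^2 \<le> (R x - Q x)^2"
      using mult_right_mono[of "c / Q x" 1 "(R x - Q x)^2"] by simp
  qed
  also have "\<dots> \<le> (\<Sum>x\<in>UNIV. \<bar>R x - Q x\<bar>)^2 / 2"
    using R Q by (intro abs_sum_bound) (simp add: sum_subtractf is_pmf_def)
  also have "\<dots> \<le> kl_div R Q" using pinsker[OF R Q Qp] by simp
  finally show ?thesis .
qed

lemma phi_lim: "((\<lambda>s::real. ((1 + s) * ln (1+s) - s) / s^2) \<longlongrightarrow> 1/2) (at 0)"
  by real_asymp

lemma kl_limit:
  fixes Q v :: "'a::finite \<Rightarrow> real"
  assumes Qp: "\<And>x. Q x > 0" and sv: "sum v UNIV = 0"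
  shows "((\<lambda>e. kl_div (\<lambda>x. Q x + e * v x) Q / e^2) \<longlongrightarrow> (\<Sum>x\<in>UNIV. (v x)^2 / Q x) / 2) (at_right 0)"
proof -
  define \<phi> where "\<phi> = (\<lambda>s::real. ((1 + s) * ln (1+s) - s) / s^2)"
  define F where "F = (\<lambda>e x. if v x = 0 then 0 else (v x)^2 / Q x * \<phi> (e * v x / Q x))"
  have ev1: "eventually (\<lambda>e. \<forall>x\<in>UNIV. Q x + e * v x > 0) (at_right 0)"
  proof (rule eventually_ball_finite, simp, intro ballI)
    fix x
    have "((\<lambda>e. Q x + e * v x) \<longlongrightarrow> Q x + 0 * v x) (at_right 0)"
      by (intro tendsto_intros)
    then show "eventually (\<lambda>e. Q x + e * v x > 0) (at_right 0)"
      using Qp[of x] by (intro order_tendstoD(1)) auto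
  qed
  have ev: "eventually (\<lambda>e. kl_div (\<lambda>x. Q x + e * v x) Q / e^2 = (\<Sum>x\<in>UNIV. F e x)) (at_right 0)"
    using ev1 eventually_at_right_less[of 0]
  proof eventually_elim
    case (elim e)
    have "kl_div (\<lambda>x. Q x + e * v x) Q = (\<Sum>x\<in>UNIV. (Q x + e * v x) * ln ((Q x + e * v x) / Q x) - e * v x)"
    proof -
      have "kl_div (\<lambda>x. Q x + e * v x) Q = (\<Sum>x\<in>UNIV. (Q x + e * v x) * ln ((Q x + e * v x) / Q x))"
        unfolding kl_div_def using elim(1) by (intro sum.cong) (auto simp: less_imp_neq[symmetric])
      moreover have "(\<Sum>x\<in>UNIV. e * v x) = 0" using sv by (simp add: sum_distrib_left[symmetric])
      ultimately show ?thesis by (simp add: sum_subtractf)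
    qed
    also have "\<dots> = (\<Sum>x\<in>UNIV. e^2 * F e x)"
    proof (rule sum.cong[OF refl])
      fix x
      show "(Q x + e * v x) * ln ((Q x + e * v x) / Q x) - e * v x = e^2 * F e x"
      proof (cases "v x = 0")
        case True then show ?thesis using Qp[of x] by (simp add: F_def)
      next
        case False
        define s where "s = e * v x / Q x"
        have s0: "s \<noteq> 0" using False elim(2) Qp[of x] by (simp add: s_def)
        have q1: "Q x + e * v x = Q x * (1 + s)" using Qp[of x] unfolding s_def by (simp add: distrib_left)
        have es: "e * v x = Q x * s" using Qp[of x] by (simp add: s_def)
        have q2: "Q x + Q x * s = Q x * (1 + s)" by (simp add: distrib_left)
        have q3: "(Q x + e * v x) / Q x = 1 + s" using Qp[of x] by (simp add: s_def field_simps)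
        have "(Q x + e * v x) * ln ((Q x + e * v x) / Q x) - e * v x = Q x * (1 + s) * ln (1 + s) - Q x * s"
          unfolding q3 by (simp only: es q2)
        also have "\<dots> = Q x * ((1+s) * ln (1+s) - s)"
          by (simp add: algebra_simps)
        also have "\<dots> = Q x * s^2 * \<phi> s" using s0 by (simp add: \<phi>_def)
        also have "\<dots> = e^2 * F e x" using False Qp[of x]
          unfolding F_def s_def by (simp add: power2_eq_square)
        finally show ?thesis .
      qed
    qed
    also have "\<dots> = e^2 * (\<Sum>x\<in>UNIV. F e x)" by (simp add: sum_distrib_left)
    finally show ?case using elim(2) by simp
  qed
  have lim: "((\<lambda>e. \<Sum>x\<in>UNIV. F e x) \<longlongrightarrow> (\<Sum>x\<in>UNIV. (v x)^2 / Q x / 2)) (at_right 0)"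
  proof (rule tendsto_sum)
    fix x
    show "((\<lambda>e. F e x) \<longlongrightarrow> (v x)^2 / Q x / 2) (at_right 0)"
    proof (cases "v x = 0")
      case True then show ?thesis by (simp add: F_def)
    next
      case False
      have fl: "filterlim (\<lambda>e. e * v x / Q x) (at 0) (at_right 0)"
      proof (rule filterlim_atI)
        show "((\<lambda>e. e * v x / Q x) \<longlongrightarrow> 0) (at_right 0)"
          using Qp[of x] by (auto intro!: tendsto_eq_intros)
        show "eventually (\<lambda>e. e * v x / Q x \<noteq> 0) (at_right 0)"
          using eventually_at_right_less[of 0] by eventually_elim (use False Qp[of x] in auto)
      qed
      have "((\<lambda>e. \<phi> (e * v x / Q x)) \<longlongrightarrow> 1/2) (at_right 0)"
        using filterlim_compose[OF phi_lim[folded \<phi>_def] fl] .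
      then have "((\<lambda>e. (v x)^2 / Q x * \<phi> (e * v x / Q x)) \<longlongrightarrow> (v x)^2 / Q x * (1/2)) (at_right 0)"
        by (intro tendsto_intros)
      then show ?thesis using False by (simp add: F_def)
    qed
  qed
  have "(\<Sum>x\<in>UNIV. (v x)^2 / Q x / 2) = (\<Sum>x\<in>UNIV. (v x)^2 / Q x) / 2"
    by (simp add: sum_divide_distrib)
  note eq = this
  have "((\<lambda>e. \<Sum>x\<in>UNIV. F e x) \<longlongrightarrow> (\<Sum>x\<in>UNIV. (v x)^2 / Q x) / 2) (at_right 0)"
    using lim unfolding eq .
  then show ?thesis using tendsto_cong[OF ev] by simp
qed

lemma chan_marg:
  assumes "\<And>x. 0 < marg_X P x"
  shows "channel_apply P (marg_X P) = marg_Y P"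
proof
  fix y
  show "channel_apply P (marg_X P) y = marg_Y P y"
    unfolding channel_apply_def channel_def marg_Y_def
    using assms by (intro sum.cong) (auto simp: less_imp_neq[symmetric])
qed

lemma chan_sum1:
  assumes "0 < marg_X P x"
  shows "(\<Sum>y\<in>UNIV. channel P y x) = 1"
  using assms unfolding channel_def by (simp add: sum_divide_distrib[symmetric] marg_X_def[symmetric])

lemma chan_nonneg:
  assumes "\<And>x y. 0 \<le> P x y" "\<And>x. 0 < marg_X P x"
  shows "0 \<le> channel P y x"
  using assms unfolding channel_def by (simp add: less_imp_le)

lemma chan_pmf:
  assumes "\<And>x y. 0 \<le> P x y" "\<And>x. 0 < marg_X P x" "is_pmf R"
  shows "is_pmf (channel_apply P R)"
proof -
  have "0 \<le> channel_apply P R y" for y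
    unfolding channel_apply_def using assms chan_nonneg[OF assms(1,2)]
    by (intro sum_nonneg mult_nonneg_nonneg) (auto simp: is_pmf_def)
  moreover have "(\<Sum>y\<in>UNIV. channel_apply P R y) = 1"
  proof -
    have "(\<Sum>y\<in>UNIV. channel_apply P R y) = (\<Sum>x\<in>UNIV. \<Sum>y\<in>UNIV. channel P y x * R x)"
      unfolding channel_apply_def by (rule sum.swap)
    also have "\<dots> = (\<Sum>x\<in>UNIV. (\<Sum>y\<in>UNIV. channel P y x) * R x)"
      by (simp add: sum_distrib_right)
    also have "\<dots> = (\<Sum>x\<in>UNIV. R x)" using chan_sum1[OF assms(2)] by simp
    also have "\<dots> = 1" using assms(3) by (simp add: is_pmf_def)
    finally show ?thesis .
  qed
  ultimately show ?thesis by (simp add: is_pmf_def)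
qed

lemma chan_lin:
  "channel_apply P (\<lambda>x. A x + e * (R x - A x)) y
     = channel_apply P A y + e * (channel_apply P R y - channel_apply P A y)"
  unfolding channel_apply_def
  by (simp add: algebra_simps sum.distrib sum_subtractf sum_distrib_left)

lemma chi2_dpi:
  assumes P0: "\<And>x y. 0 \<le> P x y" and PX: "\<And>x. 0 < marg_X P x" and PY: "\<And>y. 0 < marg_Y P y"
  shows "chi2_div (channel_apply P R) (marg_Y P) \<le> chi2_div R (marg_X P)"
proof -
  define d where "d x = R x - marg_X P x" for x
  have diff: "channel_apply P R y - marg_Y P y = (\<Sum>x\<in>UNIV. channel P y x * d x)" for y
  proof -
    have "marg_Y P y = channel_apply P (marg_X P) y" using chan_marg[OF PX] by simp
    then show ?thesis unfolding channel_apply_def d_def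
      by (simp add: sum_subtractf algebra_simps)
  qed
  have each: "(\<Sum>x\<in>UNIV. channel P y x * d x)^2 / marg_Y P y \<le> (\<Sum>x\<in>UNIV. channel P y x * ((d x)^2 / marg_X P x))" for y
  proof -
    have ab: "channel P y x * d x = (sqrt (P x y) * d x / marg_X P x) * sqrt (P x y)" for x
      using P0[of x y] by (simp add: channel_def)
    have a2: "(sqrt (P x y) * d x / marg_X P x)^2 = channel P y x * ((d x)^2 / marg_X P x)" for x
      using P0[of x y] by (simp add: channel_def power_divide power_mult_distrib power2_eq_square)
    have b2: "(\<Sum>x\<in>UNIV. (sqrt (P x y))^2) = marg_Y P y"
      using P0 by (simp add: marg_Y_def)
    have "(\<Sum>x\<in>UNIV. channel P y x * d x)^2 \<le> (\<Sum>x\<in>UNIV. channel P y x * ((d x)^2 / marg_X P x)) * marg_Y P y"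
      using Cauchy_Schwarz_ineq_sum[of "\<lambda>x. sqrt (P x y) * d x / marg_X P x" "\<lambda>x. sqrt (P x y)" UNIV]
      by (simp only: ab a2 b2)
    then show ?thesis using PY[of y] by (simp add: pos_divide_le_eq)
  qed
  have "chi2_div (channel_apply P R) (marg_Y P) = (\<Sum>y\<in>UNIV. (\<Sum>x\<in>UNIV. channel P y x * d x)^2 / marg_Y P y)"
    unfolding chi2_div_def by (simp add: diff)
  also have "\<dots> \<le> (\<Sum>y\<in>UNIV. \<Sum>x\<in>UNIV. channel P y x * ((d x)^2 / marg_X P x))"
    by (rule sum_mono) (rule each)
  also have "\<dots> = (\<Sum>x\<in>UNIV. \<Sum>y\<in>UNIV. channel P y x * ((d x)^2 / marg_X P x))"
    by (rule sum.swap)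
  also have "\<dots> = (\<Sum>x\<in>UNIV. (\<Sum>y\<in>UNIV. channel P y x) * ((d x)^2 / marg_X P x))"
    by (simp only: sum_distrib_right)
  also have "\<dots> = chi2_div R (marg_X P)"
    using chan_sum1[OF PX] by (simp add: chi2_div_def d_def)
  finally show ?thesis .
qed

theorem theorem2:
  fixes P :: "'x::finite \<Rightarrow> 'y::finite \<Rightarrow> real"
  assumes "CARD('x) \<ge> 2" and "CARD('y) \<ge> 2"
    and "\<And>x y. 0 \<le> P x y"
    and "(\<Sum>x\<in>UNIV. \<Sum>y\<in>UNIV. P x y) = 1"
    and "\<And>x. 0 < marg_X P x"
    and "\<And>y. 0 < marg_Y P y"
  shows "eta_chi2 P \<le> eta_KL P \<and>
         eta_KL P \<le> eta_chi2 P / Min (range (marg_X P))"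
proof -
  note P0 = assms(3) and PX = assms(5) and PY = assms(6)
  have WX: "channel_apply P (marg_X P) = marg_Y P" by (rule chan_marg[OF PX])
  have pmfX: "is_pmf (marg_X P)"
    using assms(4) PX by (simp add: is_pmf_def marg_X_def less_imp_le)
  have pmfY: "is_pmf (marg_Y P)"
  proof -
    have "(\<Sum>y\<in>UNIV. marg_Y P y) = 1"
      unfolding marg_Y_def using assms(4) by (subst sum.swap) simp
    then show ?thesis using PY by (simp add: is_pmf_def less_imp_le)
  qed
  define c where "c = Min (range (marg_X P))"
  have c_in: "c \<in> range (marg_X P)" unfolding c_def by (rule Min_in) auto
  have cpos: "c > 0" using c_in PX by auto
  have cle: "c \<le> marg_X P x" for x unfolding c_def by (rule Min_le) auto
  define SC where "SC = {chi2_div (channel_apply P R) (channel_apply P (marg_X P)) / chi2_div R (marg_X P) | R.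
           is_pmf R \<and> 0 < chi2_div R (marg_X P)}"
  define SK where "SK = {kl_div (channel_apply P R) (channel_apply P (marg_X P)) / kl_div R (marg_X P) | R.
           is_pmf R \<and> 0 < kl_div R (marg_X P)}"
  have etaC: "eta_chi2 P = Sup SC" by (simp add: eta_chi2_def contraction_coeff_def SC_def)
  have etaK: "eta_KL P = Sup SK" by (simp add: eta_KL_def contraction_coeff_def SK_def)
  have chi_nn: "0 \<le> chi2_div R Q" if "\<And>x. Q x > 0" for R Q :: "'b::finite \<Rightarrow> real"
    unfolding chi2_div_def using that by (intro sum_nonneg divide_nonneg_pos) auto
  have chi_pos: "0 < chi2_div R (marg_X P)" if "R x \<noteq> marg_X P x" for R x
    unfolding chi2_div_def using that PX
    by (intro sum_pos2[where i=x]) (auto intro!: divide_nonneg_pos divide_pos_pos)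
  have klXX: "kl_div (marg_X P) (marg_X P) = 0"
    unfolding kl_div_def using PX by (simp add: less_imp_neq[symmetric])
  obtain x0 x1 :: 'x where x01: "x0 \<noteq> x1"
  proof -
    have "\<not> (\<forall>x1. x1 = (undefined::'x))"
    proof
      assume "\<forall>x1. x1 = (undefined::'x)"
      then have "(UNIV::'x set) = {undefined}" by auto
      then have "card (UNIV::'x set) = card {undefined::'x}" by (rule arg_cong)
      then have "CARD('x) = 1" by simp
      then show False using assms(1) by simp
    qed
    then show ?thesis using that by blast
  qed
  define R0 where "R0 = (\<lambda>x. if x = x0 then 1 else (0::real))"
  have pmf0: "is_pmf R0" unfolding is_pmf_def R0_def by simp
  have chi0: "0 < chi2_div R0 (marg_X P)"
    using chi_pos[of R0 x1] PX[of x1] x01 by (simp add: R0_def)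
  have kl0: "0 < kl_div R0 (marg_X P)"
    using kl_ge_chi[OF pmf0 pmfX PX cpos cle] chi0 cpos by (smt (verit) mult_pos_pos)
  have SC_bd: "0 \<le> r \<and> r \<le> 1" if "r \<in> SC" for r
  proof -
    from that obtain R where r: "r = chi2_div (channel_apply P R) (marg_Y P) / chi2_div R (marg_X P)"
      and R: "is_pmf R" "0 < chi2_div R (marg_X P)" unfolding SC_def WX by auto
    have "chi2_div (channel_apply P R) (marg_Y P) \<le> chi2_div R (marg_X P)" by (rule chi2_dpi[OF P0 PX PY])
    moreover have "0 \<le> chi2_div (channel_apply P R) (marg_Y P)" by (rule chi_nn[OF PY])
    ultimately show ?thesis using R(2) by (simp add: r divide_le_eq_1)
  qed
  have bddC: "bdd_above SC" using SC_bd by (intro bdd_aboveI[of _ 1]) auto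
  have r0C: "chi2_div (channel_apply P R0) (channel_apply P (marg_X P)) / chi2_div R0 (marg_X P) \<in> SC"
    unfolding SC_def using pmf0 chi0 by blast
  have SCne: "SC \<noteq> {}" using r0C by blast
  have etaC_nn: "0 \<le> Sup SC" using SC_bd[OF r0C] cSup_upper[OF r0C bddC] by linarith
  have SK_bd: "r \<le> Sup SC / c" if "r \<in> SK" for r
  proof -
    from that obtain R where r: "r = kl_div (channel_apply P R) (marg_Y P) / kl_div R (marg_X P)"
      and R: "is_pmf R" "0 < kl_div R (marg_X P)" unfolding SK_def WX by auto
    have "R \<noteq> marg_X P" using R(2) klXX by auto
    then obtain x where "R x \<noteq> marg_X P x" by auto
    then have chiR: "0 < chi2_div R (marg_X P)" by (rule chi_pos)
    have "chi2_div (channel_apply P R) (channel_apply P (marg_X P)) / chi2_div R (marg_X P) \<in> SC"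
      unfolding SC_def using R chiR by blast
    then have "chi2_div (channel_apply P R) (marg_Y P) / chi2_div R (marg_X P) \<le> Sup SC"
      using cSup_upper[OF _ bddC] WX by simp
    then have A: "chi2_div (channel_apply P R) (marg_Y P) \<le> Sup SC * chi2_div R (marg_X P)"
      using chiR by (simp add: pos_divide_le_eq)
    have B: "kl_div (channel_apply P R) (marg_Y P) \<le> chi2_div (channel_apply P R) (marg_Y P)"
      by (rule kl_le_chi[OF chan_pmf[OF P0 PX R(1)] pmfY PY])
    have C: "c * chi2_div R (marg_X P) \<le> kl_div R (marg_X P)" by (rule kl_ge_chi[OF R(1) pmfX PX cpos cle])
    have "Sup SC * chi2_div R (marg_X P) \<le> Sup SC * (kl_div R (marg_X P) / c)"
      using C cpos etaC_nn by (intro mult_left_mono) (simp_all add: pos_le_divide_eq mult.commute)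
    with A B have "kl_div (channel_apply P R) (marg_Y P) \<le> Sup SC / c * kl_div R (marg_X P)" by simp
    then show ?thesis using R(2) by (simp add: r pos_divide_le_eq)
  qed
  have bddK: "bdd_above SK" using SK_bd by (intro bdd_aboveI[of _ "Sup SC / c"]) auto
  have r0K: "kl_div (channel_apply P R0) (channel_apply P (marg_X P)) / kl_div R0 (marg_X P) \<in> SK"
    unfolding SK_def using pmf0 kl0 by blast
  have SKne: "SK \<noteq> {}" using r0K by blast
  have part2: "Sup SK \<le> Sup SC / c" by (rule cSup_least[OF SKne]) (rule SK_bd)
  \<comment> \<open>chi2 ratios bounded by eta_KL via local perturbation\<close>
  have SC_K: "r \<le> Sup SK" if "r \<in> SC" for r
  proof -
    from that obtain R where r: "r = chi2_div (channel_apply P R) (marg_Y P) / chi2_div R (marg_X P)"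
      and R: "is_pmf R" "0 < chi2_div R (marg_X P)" unfolding SC_def WX by auto
    define v where "v x = R x - marg_X P x" for x
    define vY where "vY y = channel_apply P R y - marg_Y P y" for y
    define Re where "Re e = (\<lambda>x. marg_X P x + e * (R x - marg_X P x))" for e :: real
    have sv: "sum v UNIV = 0" using R(1) pmfX by (simp add: v_def sum_subtractf is_pmf_def)
    have svY: "sum vY UNIV = 0" using chan_pmf[OF P0 PX R(1)] pmfY by (simp add: vY_def sum_subtractf is_pmf_def)
    have WRe: "channel_apply P (Re e) = (\<lambda>y. marg_Y P y + e * vY y)" for e
      unfolding Re_def vY_def by (rule ext) (simp add: chan_lin WX)
    have Re_v: "Re e = (\<lambda>x. marg_X P x + e * v x)" for e by (simp add: Re_def v_def)
    have L1: "((\<lambda>e. kl_div (channel_apply P (Re e)) (marg_Y P) / e^2) \<longlongrightarrow> chi2_div (channel_apply P R) (marg_Y P) / 2) (at_right 0)"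
    proof -
      have "chi2_div (channel_apply P R) (marg_Y P) = (\<Sum>y\<in>UNIV. (vY y)^2 / marg_Y P y)"
        by (simp add: chi2_div_def vY_def)
      then show ?thesis unfolding WRe using kl_limit[OF PY svY] by simp
    qed
    have L2: "((\<lambda>e. kl_div (Re e) (marg_X P) / e^2) \<longlongrightarrow> chi2_div R (marg_X P) / 2) (at_right 0)"
    proof -
      have "chi2_div R (marg_X P) = (\<Sum>x\<in>UNIV. (v x)^2 / marg_X P x)"
        by (simp add: chi2_div_def v_def)
      then show ?thesis unfolding Re_v using kl_limit[OF PX sv] by simp
    qed
    have L: "((\<lambda>e. (kl_div (channel_apply P (Re e)) (marg_Y P) / e^2) / (kl_div (Re e) (marg_X P) / e^2))
        \<longlongrightarrow> (chi2_div (channel_apply P R) (marg_Y P) / 2) / (chi2_div R (marg_X P) / 2)) (at_right 0)"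
      by (rule tendsto_divide[OF L1 L2]) (use R(2) in simp)
    have lim_eq: "(chi2_div (channel_apply P R) (marg_Y P) / 2) / (chi2_div R (marg_X P) / 2) = r"
      by (simp add: r)
    have ev_lt1: "eventually (\<lambda>e. e < 1) (at_right (0::real))"
      by (rule order_tendstoD(2)[OF tendsto_ident_at]) simp
    have ev: "eventually (\<lambda>e. (kl_div (channel_apply P (Re e)) (marg_Y P) / e^2) / (kl_div (Re e) (marg_X P) / e^2) \<le> Sup SK) (at_right 0)"
      using ev_lt1 eventually_at_right_less[of "0::real"]
    proof eventually_elim
      case (elim e)
      have pmfRe: "is_pmf (Re e)"
      proof -
        have "0 \<le> Re e x" for x
        proof -
          have "Re e x = (1 - e) * marg_X P x + e * R x" by (simp add: Re_def algebra_simps)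
          moreover have "0 \<le> (1 - e) * marg_X P x" using elim PX[of x] by simp
          moreover have "0 \<le> e * R x" using elim R(1) by (simp add: is_pmf_def)
          ultimately show ?thesis by simp
        qed
        moreover have "sum (Re e) UNIV = 1"
          using R(1) pmfX by (simp add: Re_def sum.distrib sum_distrib_left[symmetric] sum_subtractf is_pmf_def)
        ultimately show ?thesis by (simp add: is_pmf_def)
      qed
      have "chi2_div (Re e) (marg_X P) = e^2 * chi2_div R (marg_X P)"
        by (simp add: chi2_div_def Re_def sum_distrib_left power_mult_distrib)
      then have "0 < chi2_div (Re e) (marg_X P)" using elim R(2) by simp
      then have klpos: "0 < kl_div (Re e) (marg_X P)"
        using kl_ge_chi[OF pmfRe pmfX PX cpos cle] cpos by (smt (verit) mult_pos_pos)
      have "kl_div (channel_apply P (Re e)) (channel_apply P (marg_X P)) / kl_div (Re e) (marg_X P) \<in> SK"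
        unfolding SK_def using pmfRe klpos by blast
      then have "kl_div (channel_apply P (Re e)) (marg_Y P) / kl_div (Re e) (marg_X P) \<le> Sup SK"
        using cSup_upper[OF _ bddK] WX by simp
      then show ?case using elim by simp
    qed
    have "(chi2_div (channel_apply P R) (marg_Y P) / 2) / (chi2_div R (marg_X P) / 2) \<le> Sup SK"
      by (rule tendsto_upperbound[OF L ev]) simp
    then show ?thesis using lim_eq by simp
  qed
  have part1: "Sup SC \<le> Sup SK" by (rule cSup_least[OF SCne]) (rule SC_K)
  show ?thesis using part1 part2 by (simp add: etaC etaK c_def)
qed

end
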